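(* Let $(G_x)$ be the coclass family defined by $\eta\in H^3(P,T)$, $x\in\mathbb{N}_0$, and let $A = C_{L,x}(\gamma)\times O$ and $B$ be objects of $\mathcal{A}_p(G_x)$, where $L\in\mathcal{L}_\eta$, $\gamma\in Z^1(L,M_x)$, $O\in\mathcal{O}_x(L)$. Let $g=(w,m)$ and $g'=(w,m')$ be two elements of $G_x$ that each induce a morphism in $\mathrm{Hom}(A,B)$. Then $g$ and $g'$ induce the same morphism in $\mathrm{Hom}(A,B)$ if and only if $m-m'\in C_{M_x}(L)^w$, where $C_{M_x}(L)=\{n\in M_x\mid [n,l]=0 \text{ for all } l\in L\}$.
   Context: Conventions: normalised cocycles $Z^n$, coboundaries $B^n$, cohomology $H^n$ for right modules written additively; $\mathrm{Ext}(\tau)$ is $G\times M$ with $(g,m)(h,n)=(gh,m^h+n+\tau(g,h))$; for $n \in M_x$, $l\in P$, $[n,l] = n^l - n$. Setting: $S$ infinite pro-$p$-group of finite coclass; $T=\gamma_\ell(S)$ ($\ell$ large), $T\cong\mathbb{Z}_p^d$, $P=S/T$ finite, $|P|=p^m$ (here $m$ is only the exponent of $|P|$ in the definition of $e$), the series $T_0=T$, $T_{i+1}=[T_i,S]$ with all indices $p$; $T$ an additive $P$-module via conjugation; $S=\mathrm{Ext}(\rho)$, $\rho\in Z^2(P,T)$. $\mathcal{L}$ = elementary abelian $L\leq P$ with $\rho_L\in B^2(L,T)$; $\mathcal{L}_\eta=\{L\in\mathcal{L}\mid\mathrm{res}^P_L(\eta)=0\in H^3(L,T)\}$. Coclass family: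 $e=3\log_p|P|$, $M_x=T/p^{x+e}T$; $pro_x: Z^2(P,T)\to Z^2(P,M_x)$ induced by projection with image $I^2(P,M_x)$; $J^2(P,M_x)$ image of $Z^2(P,p^{x+e-\log_p|P|}T/p^{x+e}T)\to Z^2(P,M_x)$ induced by inclusion; fixed complements $K^2(P,M_x)\leq J^2(P,M_x)$ of $I^2(P,M_x)$ in $Z^2(P,M_x)$ with $mul(K^2(P,M_x))=K^2(P,M_{x+1})$ ($mul$ induced by $t+p^{x+e}T\mapsto pt+p^{x+e+1}T$). The composite $Z^2(P,M_x)\to H^2(P,M_x)\to H^3(P,p^{x+e}T)\to H^3(P,T)$ (quotient, connecting map, division by $p^{x+e}$) restricts to an isomorphism on $K^2(P,M_x)$; $\eta_x$ is the preimage of $\eta$, $\rho_x=pro_x(\rho)$, $G_x=\mathrm{Ext}(\rho_x+\eta_x)$, $M_x=\{(1,m)\}$. For $L\in\mathcal{L}_\eta$, a complement $C_{L,x}=\{(l,t_{L,x}(l))\}$ to $M_x$ in the full preimage of $L$ in $G_x$ is fixed, and $C_{L,x}(\gamma)=\{(l,t_{L,x}(l)+\gamma(l))\}$ for $\gamma\in Z^1(L,M_x)$. $\mathcal{O}_x(L)$ is the set of elementary abelian subgroups of $M_x$ centralised by $L$. $\mathcal{A}_p(G_x)$ is the Quillen category: objects elementary abelian $p$-subgroups, morphisms $E\to F$ the maps $e\mapsto e^g$ with $g\in G_x$, $E^g\leq F$. *)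

theory Defs
  imports "HOL-Algebra.Algebra"
begin

text \<open>Right P-module structure on an additive abelian group 'm; act m g stands for m^g.\<close>
definition right_module :: "('p,'a) monoid_scheme \<Rightarrow> ('m::ab_group_add \<Rightarrow> 'p \<Rightarrow> 'm) \<Rightarrow> bool" where
  "right_module P act \<longleftrightarrow>
     (\<forall>m. act m \<one>\<^bsub>P\<^esub> = m) \<and>
     (\<forall>m g h. g \<in> carrier P \<longrightarrow> h \<in> carrier P \<longrightarrow> act (act m g) h = act m (g \<otimes>\<^bsub>P\<^esub> h)) \<and>
     (\<forall>m n g. g \<in> carrier P \<longrightarrow> act (m + n) g = act m g + act n g)"

definition normalised_2cocycle :: "('p,'a) monoid_scheme \<Rightarrow> ('m::ab_group_add \<Rightarrow> 'p \<Rightarrow> 'm) \<Rightarrow> ('p \<Rightarrow> 'p \<Rightarrow> 'm) \<Rightarrow> bool" where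
  "normalised_2cocycle P act \<tau> \<longleftrightarrow>
     (\<forall>h\<in>carrier P. \<tau> \<one>\<^bsub>P\<^esub> h = 0) \<and> (\<forall>g\<in>carrier P. \<tau> g \<one>\<^bsub>P\<^esub> = 0) \<and>
     (\<forall>g\<in>carrier P. \<forall>h\<in>carrier P. \<forall>k\<in>carrier P.
        act (\<tau> g h) k + \<tau> (g \<otimes>\<^bsub>P\<^esub> h) k = \<tau> g (h \<otimes>\<^bsub>P\<^esub> k) + \<tau> h k)"

definition normalised_1cocycle :: "('p,'a) monoid_scheme \<Rightarrow> 'p set \<Rightarrow> ('m::ab_group_add \<Rightarrow> 'p \<Rightarrow> 'm) \<Rightarrow> ('p \<Rightarrow> 'm) \<Rightarrow> bool" where
  "normalised_1cocycle P L act \<gamma> \<longleftrightarrow>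
     \<gamma> \<one>\<^bsub>P\<^esub> = 0 \<and> (\<forall>l\<in>L. \<forall>k\<in>L. \<gamma> (l \<otimes>\<^bsub>P\<^esub> k) = act (\<gamma> l) k + \<gamma> k)"

definition Ext :: "('p,'a) monoid_scheme \<Rightarrow> ('m::ab_group_add \<Rightarrow> 'p \<Rightarrow> 'm) \<Rightarrow> ('p \<Rightarrow> 'p \<Rightarrow> 'm) \<Rightarrow> ('p \<times> 'm) monoid" where
  "Ext P act \<tau> = \<lparr>carrier = carrier P \<times> UNIV,
      monoid.mult = (\<lambda>(g,m) (h,n). (g \<otimes>\<^bsub>P\<^esub> h, act m h + n + \<tau> g h)),
      monoid.one = (\<one>\<^bsub>P\<^esub>, 0)\<rparr>"

definition elem_ab_subgroup :: "nat \<Rightarrow> ('g,'b) monoid_scheme \<Rightarrow> 'g set \<Rightarrow> bool" where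
  "elem_ab_subgroup p G E \<longleftrightarrow> subgroup E G \<and>
     (\<forall>x\<in>E. \<forall>y\<in>E. x \<otimes>\<^bsub>G\<^esub> y = y \<otimes>\<^bsub>G\<^esub> x) \<and> (\<forall>x\<in>E. x [^]\<^bsub>G\<^esub> p = \<one>\<^bsub>G\<^esub>)"

definition quillen_obj :: "nat \<Rightarrow> ('g,'b) monoid_scheme \<Rightarrow> 'g set \<Rightarrow> bool" where
  "quillen_obj p G E \<longleftrightarrow> elem_ab_subgroup p G E \<and> E \<noteq> {\<one>\<^bsub>G\<^esub>}"

definition elem_ab_add :: "nat \<Rightarrow> ('m::ab_group_add) set \<Rightarrow> bool" where
  "elem_ab_add p Ob \<longleftrightarrow> 0 \<in> Ob \<and> (\<forall>a\<in>Ob. \<forall>b\<in>Ob. a + b \<in> Ob) \<and> (\<forall>a\<in>Ob. - a \<in> Ob) \<and>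
     (\<forall>a\<in>Ob. ((+) a ^^ p) 0 = 0)"

definition calO :: "nat \<Rightarrow> 'p set \<Rightarrow> ('m::ab_group_add \<Rightarrow> 'p \<Rightarrow> 'm) \<Rightarrow> 'm set set" where
  "calO p L act = {Ob. elem_ab_add p Ob \<and> (\<forall>n\<in>Ob. \<forall>l\<in>L. act n l = n)}"

definition bracket :: "('m::ab_group_add \<Rightarrow> 'p \<Rightarrow> 'm) \<Rightarrow> 'm \<Rightarrow> 'p \<Rightarrow> 'm" where
  "bracket act n l = act n l - n"

definition centraliser_M :: "'p set \<Rightarrow> ('m::ab_group_add \<Rightarrow> 'p \<Rightarrow> 'm) \<Rightarrow> 'm set" where
  "centraliser_M L act = {n. \<forall>l\<in>L. bracket act n l = 0}"

text \<open>C_{L}(gamma) = {(l, t(l)+gamma(l))}; the fixed complement is C_gamma with gamma = 0.\<close>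
definition C_gamma :: "'p set \<Rightarrow> ('p \<Rightarrow> 'm::ab_group_add) \<Rightarrow> ('p \<Rightarrow> 'm) \<Rightarrow> ('p \<times> 'm) set" where
  "C_gamma L t \<gamma> = {(l, t l + \<gamma> l) | l. l \<in> L}"

definition embM :: "('p,'a) monoid_scheme \<Rightarrow> 'm set \<Rightarrow> ('p \<times> 'm) set" where
  "embM P Ob = {(\<one>\<^bsub>P\<^esub>, n) | n. n \<in> Ob}"

definition induces_morphism :: "('g,'b) monoid_scheme \<Rightarrow> 'g set \<Rightarrow> 'g set \<Rightarrow> 'g \<Rightarrow> bool" where
  "induces_morphism G A B g \<longleftrightarrow> g \<in> carrier G \<and>
     (\<forall>a\<in>A. inv\<^bsub>G\<^esub> g \<otimes>\<^bsub>G\<^esub> a \<otimes>\<^bsub>G\<^esub> g \<in> B)"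

definition same_morphism :: "('g,'b) monoid_scheme \<Rightarrow> 'g set \<Rightarrow> 'g \<Rightarrow> 'g \<Rightarrow> bool" where
  "same_morphism G A g g' \<longleftrightarrow>
     (\<forall>a\<in>A. inv\<^bsub>G\<^esub> g \<otimes>\<^bsub>G\<^esub> a \<otimes>\<^bsub>G\<^esub> g = inv\<^bsub>G\<^esub> g' \<otimes>\<^bsub>G\<^esub> a \<otimes>\<^bsub>G\<^esub> g')"

end

theory Submission
  imports Defs
begin


lemma rm_basic:
  assumes "right_module P act"
  shows "act m \<one>\<^bsub>P\<^esub> = m"
    and "g \<in> carrier P \<Longrightarrow> h \<in> carrier P \<Longrightarrow> act (act m g) h = act m (g \<otimes>\<^bsub>P\<^esub> h)"
    and "g \<in> carrier P \<Longrightarrow> act (a + b) g = act a g + act b g"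
    and "g \<in> carrier P \<Longrightarrow> act 0 g = 0"
    and "g \<in> carrier P \<Longrightarrow> act (- a) g = - act a g"
    and "g \<in> carrier P \<Longrightarrow> act (a - b) g = act a g - act b g"
proof -
  show "act m \<one>\<^bsub>P\<^esub> = m" using assms unfolding right_module_def by blast
  show "g \<in> carrier P \<Longrightarrow> h \<in> carrier P \<Longrightarrow> act (act m g) h = act m (g \<otimes>\<^bsub>P\<^esub> h)"
    using assms unfolding right_module_def by blast
  have add: "\<And>a b g. g \<in> carrier P \<Longrightarrow> act (a + b) g = act a g + act b g"
    using assms unfolding right_module_def by blast
  thus "g \<in> carrier P \<Longrightarrow> act (a + b) g = act a g + act b g" by blast
  have z: "\<And>g. g \<in> carrier P \<Longrightarrow> act 0 g = 0"
  proof -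
    fix g assume g: "g \<in> carrier P"
    have "act (0+0) g = act 0 g + act 0 g" using add[OF g] .
    thus "act 0 g = 0" by simp
  qed
  thus "g \<in> carrier P \<Longrightarrow> act 0 g = 0" by blast
  have n: "\<And>a g. g \<in> carrier P \<Longrightarrow> act (- a) g = - act a g"
  proof -
    fix a g assume g: "g \<in> carrier P"
    have "act (a + - a) g = act a g + act (-a) g" using add[OF g] .
    thus "act (- a) g = - act a g" using z[OF g] by (simp add: eq_neg_iff_add_eq_0 add.commute)
  qed
  thus "g \<in> carrier P \<Longrightarrow> act (- a) g = - act a g" by blast
  show "g \<in> carrier P \<Longrightarrow> act (a - b) g = act a g - act b g"
    using add n by (metis diff_conv_add_uminus)
qed

lemma Ext_mult: "(g,m) \<otimes>\<^bsub>Ext P act \<tau>\<^esub> (h,n) = (g \<otimes>\<^bsub>P\<^esub> h, act m h + n + \<tau> g h)"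
  unfolding Ext_def by simp

lemma Ext_group:
  assumes G: "group P" and M: "right_module P act" and C: "normalised_2cocycle P act \<tau>"
  shows "group (Ext P act \<tau>)"
proof (rule groupI)
  interpret P: group P by (rule G)
  note rm = rm_basic[OF M]
  have c1: "\<And>h. h \<in> carrier P \<Longrightarrow> \<tau> \<one>\<^bsub>P\<^esub> h = 0" and c2: "\<And>g. g \<in> carrier P \<Longrightarrow> \<tau> g \<one>\<^bsub>P\<^esub> = 0"
   and c3: "\<And>g h k. g \<in> carrier P \<Longrightarrow> h \<in> carrier P \<Longrightarrow> k \<in> carrier P \<Longrightarrow>
        act (\<tau> g h) k + \<tau> (g \<otimes>\<^bsub>P\<^esub> h) k = \<tau> g (h \<otimes>\<^bsub>P\<^esub> k) + \<tau> h k"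
    using C unfolding normalised_2cocycle_def by blast+
  let ?G = "Ext P act \<tau>"
  have car: "carrier ?G = carrier P \<times> UNIV" unfolding Ext_def by simp
  have one: "\<one>\<^bsub>?G\<^esub> = (\<one>\<^bsub>P\<^esub>, 0)" unfolding Ext_def by simp
  show "\<And>x y. x \<in> carrier ?G \<Longrightarrow> y \<in> carrier ?G \<Longrightarrow> x \<otimes>\<^bsub>?G\<^esub> y \<in> carrier ?G"
    by (auto simp: car Ext_mult)
  show "\<one>\<^bsub>?G\<^esub> \<in> carrier ?G" by (simp add: car one)
  show "\<And>x y z. x \<in> carrier ?G \<Longrightarrow> y \<in> carrier ?G \<Longrightarrow> z \<in> carrier ?G \<Longrightarrow>
      x \<otimes>\<^bsub>?G\<^esub> y \<otimes>\<^bsub>?G\<^esub> z = x \<otimes>\<^bsub>?G\<^esub> (y \<otimes>\<^bsub>?G\<^esub> z)"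
  proof -
    fix x y z assume "x \<in> carrier ?G" "y \<in> carrier ?G" "z \<in> carrier ?G"
    then obtain g m h n k q where xyz: "x = (g,m)" "y = (h,n)" "z = (k,q)"
      and gs: "g \<in> carrier P" "h \<in> carrier P" "k \<in> carrier P" by (auto simp: car)
    have "act (act m h + n + \<tau> g h) k + q + \<tau> (g \<otimes>\<^bsub>P\<^esub> h) k
        = act m (h \<otimes>\<^bsub>P\<^esub> k) + act n k + q + (act (\<tau> g h) k + \<tau> (g \<otimes>\<^bsub>P\<^esub> h) k)"
      using gs rm(2,3) by (simp add: algebra_simps)
    also have "\<dots> = act m (h \<otimes>\<^bsub>P\<^esub> k) + (act n k + q + \<tau> h k) + \<tau> g (h \<otimes>\<^bsub>P\<^esub> k)"
      using c3[OF gs] by (simp add: algebra_simps)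
    finally show "x \<otimes>\<^bsub>?G\<^esub> y \<otimes>\<^bsub>?G\<^esub> z = x \<otimes>\<^bsub>?G\<^esub> (y \<otimes>\<^bsub>?G\<^esub> z)"
      using gs rm(3) by (simp add: xyz Ext_mult P.m_assoc)
  qed
  show "\<And>x. x \<in> carrier ?G \<Longrightarrow> \<one>\<^bsub>?G\<^esub> \<otimes>\<^bsub>?G\<^esub> x = x"
    by (auto simp: car one Ext_mult rm(4) c1)
  show "\<And>x. x \<in> carrier ?G \<Longrightarrow> \<exists>y\<in>carrier ?G. y \<otimes>\<^bsub>?G\<^esub> x = \<one>\<^bsub>?G\<^esub>"
  proof -
    fix x assume "x \<in> carrier ?G"
    then obtain g m where x: "x = (g,m)" and g: "g \<in> carrier P" by (auto simp: car)
    define n where "n = act (- m - \<tau> (inv\<^bsub>P\<^esub> g) g) (inv\<^bsub>P\<^esub> g)"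
    have "act n g = - m - \<tau> (inv\<^bsub>P\<^esub> g) g"
      unfolding n_def using g rm(1,2) by simp
    hence "(inv\<^bsub>P\<^esub> g, n) \<otimes>\<^bsub>?G\<^esub> x = \<one>\<^bsub>?G\<^esub>"
      using g by (simp add: x Ext_mult one)
    moreover have "(inv\<^bsub>P\<^esub> g, n) \<in> carrier ?G" using g by (simp add: car)
    ultimately show "\<exists>y\<in>carrier ?G. y \<otimes>\<^bsub>?G\<^esub> x = \<one>\<^bsub>?G\<^esub>" by blast
  qed
qed

lemma conj_same_iff:
  fixes G (structure)
  assumes "group G" "g \<in> carrier G" "h \<in> carrier G" "a \<in> carrier G"
  shows "(inv\<^bsub>G\<^esub> g \<otimes>\<^bsub>G\<^esub> a \<otimes>\<^bsub>G\<^esub> g = inv\<^bsub>G\<^esub> (h \<otimes>\<^bsub>G\<^esub> g) \<otimes>\<^bsub>G\<^esub> a \<otimes>\<^bsub>G\<^esub> (h \<otimes>\<^bsub>G\<^esub> g))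
     \<longleftrightarrow> h \<otimes>\<^bsub>G\<^esub> a = a \<otimes>\<^bsub>G\<^esub> h"
proof -
  interpret group G by fact
  have "inv (h \<otimes> g) \<otimes> a \<otimes> (h \<otimes> g) = inv g \<otimes> (inv h \<otimes> a \<otimes> h) \<otimes> g"
    using assms by (simp add: inv_mult_group m_assoc)
  moreover have "\<And>y. y \<in> carrier G \<Longrightarrow> (inv g \<otimes> a \<otimes> g = inv g \<otimes> y \<otimes> g) \<longleftrightarrow> a = y"
    using assms by (simp add: m_assoc)
  ultimately have "(inv g \<otimes> a \<otimes> g = inv (h \<otimes> g) \<otimes> a \<otimes> (h \<otimes> g)) \<longleftrightarrow> a = inv h \<otimes> a \<otimes> h"
    using assms by simp
  also have "\<dots> \<longleftrightarrow> h \<otimes> a = a \<otimes> h"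
  proof
    assume "a = inv h \<otimes> a \<otimes> h"
    hence "h \<otimes> a = h \<otimes> (inv h \<otimes> a \<otimes> h)" by simp
    thus "h \<otimes> a = a \<otimes> h" using assms by (simp add: m_assoc[symmetric])
  next
    assume e: "h \<otimes> a = a \<otimes> h"
    have "inv h \<otimes> a \<otimes> h = inv h \<otimes> (h \<otimes> a)" using assms e by (simp add: m_assoc)
    thus "a = inv h \<otimes> a \<otimes> h" using assms by (simp add: m_assoc[symmetric])
  qed
  finally show ?thesis .
qed

theorem lemma5p7:
  fixes p :: nat and P :: "('p,'a) monoid_scheme"
    and act :: "'m::{ab_group_add,finite} \<Rightarrow> 'p \<Rightarrow> 'm"
    and \<tau> :: "'p \<Rightarrow> 'p \<Rightarrow> 'm"
    and L :: "'p set" and t \<gamma> :: "'p \<Rightarrow> 'm" and Ob :: "'m set"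
    and B :: "('p \<times> 'm) set" and w :: 'p and m m' :: 'm
  assumes "Factorial_Ring.prime p"
    and "group P" and "finite (carrier P)" and "\<exists>k. card (carrier P) = p ^ k"
    and "\<exists>j. card (UNIV::'m set) = p ^ j"
    and "right_module P act"
    and "normalised_2cocycle P act \<tau>"
    and "elem_ab_subgroup p P L"
    and "subgroup (C_gamma L t (\<lambda>_. 0)) (Ext P act \<tau>)"
    and "normalised_1cocycle P L act \<gamma>"
    and "Ob \<in> calO p L act"
    and "quillen_obj p (Ext P act \<tau>) (C_gamma L t \<gamma> <#>\<^bsub>Ext P act \<tau>\<^esub> embM P Ob)"
    and "quillen_obj p (Ext P act \<tau>) B"
    and "induces_morphism (Ext P act \<tau>) (C_gamma L t \<gamma> <#>\<^bsub>Ext P act \<tau>\<^esub> embM P Ob) B (w, m)"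
    and "induces_morphism (Ext P act \<tau>) (C_gamma L t \<gamma> <#>\<^bsub>Ext P act \<tau>\<^esub> embM P Ob) B (w, m')"
  shows "same_morphism (Ext P act \<tau>) (C_gamma L t \<gamma> <#>\<^bsub>Ext P act \<tau>\<^esub> embM P Ob) (w, m) (w, m')
     \<longleftrightarrow> m - m' \<in> (\<lambda>n. act n w) ` centraliser_M L act"
proof -
  let ?G = "Ext P act \<tau>"
  let ?A = "C_gamma L t \<gamma> <#>\<^bsub>Ext P act \<tau>\<^esub> embM P Ob"
  interpret P: group P by fact
  have grp: "group ?G" by (rule Ext_group) fact+
  note rm = rm_basic[OF assms(6)]
  have c1: "\<And>h. h \<in> carrier P \<Longrightarrow> \<tau> \<one>\<^bsub>P\<^esub> h = 0" and c2: "\<And>g. g \<in> carrier P \<Longrightarrow> \<tau> g \<one>\<^bsub>P\<^esub> = 0"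
    using assms(7) unfolding normalised_2cocycle_def by blast+
  have car: "carrier ?G = carrier P \<times> UNIV" unfolding Ext_def by simp
  have LP: "L \<subseteq> carrier P" using assms(8) unfolding elem_ab_subgroup_def by (auto dest: subgroup.subset)
  have w: "w \<in> carrier P" using assms(14) unfolding induces_morphism_def by (simp add: car)
  have Ob0: "0 \<in> Ob" using assms(11) unfolding calO_def elem_ab_add_def by blast
  have Adesc: "\<And>a. a \<in> ?A \<Longrightarrow> fst a \<in> L"
    unfolding set_mult_def C_gamma_def embM_def using LP
    by (auto simp: Ext_mult)
  have Ahit: "\<And>l. l \<in> L \<Longrightarrow> \<exists>s. (l, s) \<in> ?A"
  proof -
    fix l assume l: "l \<in> L"
    have "(l, t l + \<gamma> l) \<in> C_gamma L t \<gamma>" using l unfolding C_gamma_def by blast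
    moreover have "(\<one>\<^bsub>P\<^esub>, 0) \<in> embM P Ob" using Ob0 unfolding embM_def by blast
    ultimately have "(l, t l + \<gamma> l) \<otimes>\<^bsub>?G\<^esub> (\<one>\<^bsub>P\<^esub>, 0) \<in> ?A" unfolding set_mult_def by blast
    moreover have "(l, t l + \<gamma> l) \<otimes>\<^bsub>?G\<^esub> (\<one>\<^bsub>P\<^esub>, 0) = (l, t l + \<gamma> l)"
      using l LP c2 rm(1) by (auto simp: Ext_mult)
    ultimately show "\<exists>s. (l, s) \<in> ?A" by auto
  qed
  have AG: "?A \<subseteq> carrier ?G" using Adesc LP by (auto simp: car)
  define d where "d = act (m' - m) (inv\<^bsub>P\<^esub> w)"
  have actd: "act d w = m' - m" unfolding d_def using w rm(1,2) by simp
  define h where "h = (\<one>\<^bsub>P\<^esub>, d)"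
  have hG: "h \<in> carrier ?G" by (simp add: h_def car)
  have g': "(w, m') = h \<otimes>\<^bsub>?G\<^esub> (w, m)" using w c1 actd by (simp add: h_def Ext_mult)
  have comm: "\<And>l s. l \<in> L \<Longrightarrow> (h \<otimes>\<^bsub>?G\<^esub> (l,s) = (l,s) \<otimes>\<^bsub>?G\<^esub> h) \<longleftrightarrow> act d l = d"
    using LP c1 c2 rm(1) by (auto simp: h_def Ext_mult add.commute)
  have "same_morphism ?G ?A (w, m) (w, m') \<longleftrightarrow> (\<forall>a\<in>?A. h \<otimes>\<^bsub>?G\<^esub> a = a \<otimes>\<^bsub>?G\<^esub> h)"
  proof -
    have wG: "(w,m) \<in> carrier ?G" using w by (simp add: car)
    have "\<And>a. a \<in> ?A \<Longrightarrow> (inv\<^bsub>?G\<^esub> (w,m) \<otimes>\<^bsub>?G\<^esub> a \<otimes>\<^bsub>?G\<^esub> (w,m) = inv\<^bsub>?G\<^esub> (h \<otimes>\<^bsub>?G\<^esub> (w,m)) \<otimes>\<^bsub>?G\<^esub> a \<otimes>\<^bsub>?G\<^esub> (h \<otimes>\<^bsub>?G\<^esub> (w,m)))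
       \<longleftrightarrow> h \<otimes>\<^bsub>?G\<^esub> a = a \<otimes>\<^bsub>?G\<^esub> h"
      using conj_same_iff[OF grp wG hG] AG by blast
    thus ?thesis unfolding same_morphism_def g'[symmetric] by simp
  qed
  also have "\<dots> \<longleftrightarrow> d \<in> centraliser_M L act"
  proof
    assume H: "\<forall>a\<in>?A. h \<otimes>\<^bsub>?G\<^esub> a = a \<otimes>\<^bsub>?G\<^esub> h"
    show "d \<in> centraliser_M L act" unfolding centraliser_M_def bracket_def
    proof (intro CollectI ballI)
      fix l assume l: "l \<in> L"
      then obtain s where "(l,s) \<in> ?A" using Ahit by blast
      thus "act d l - d = 0" using H comm[OF l] by auto
    qed
  next
    assume "d \<in> centraliser_M L act"
    hence "\<And>l. l \<in> L \<Longrightarrow> act d l = d" unfolding centraliser_M_def bracket_def by auto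
    thus "\<forall>a\<in>?A. h \<otimes>\<^bsub>?G\<^esub> a = a \<otimes>\<^bsub>?G\<^esub> h" using comm Adesc by (metis prod.collapse)
  qed
  also have "\<dots> \<longleftrightarrow> m - m' \<in> (\<lambda>n. act n w) ` centraliser_M L act"
  proof
    assume dC: "d \<in> centraliser_M L act"
    have "- d \<in> centraliser_M L act" using dC LP rm(5)
      unfolding centraliser_M_def bracket_def by (auto simp: subsetD)
    moreover have "m - m' = act (- d) w" using rm(5)[OF w] actd by simp
    ultimately show "m - m' \<in> (\<lambda>n. act n w) ` centraliser_M L act" by blast
  next
    assume "m - m' \<in> (\<lambda>n. act n w) ` centraliser_M L act"
    then obtain n where nC: "n \<in> centraliser_M L act" and e: "m - m' = act n w" by blast
    have "act d w = act (- n) w" using rm(5)[OF w] e actd by (simp add: algebra_simps)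
    hence "act (act d w) (inv\<^bsub>P\<^esub> w) = act (act (- n) w) (inv\<^bsub>P\<^esub> w)" by simp
    hence dn: "d = - n" using w rm(1,2) by simp
    show "d \<in> centraliser_M L act" using nC LP rm(5) unfolding dn centraliser_M_def bracket_def
      by (auto simp: subsetD)
  qed
  finally show ?thesis .
qed

end
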